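(* Let $ubav$ be a word with $|ub| = i$ and attributes $(x_i,y_i)=(x_{i+1},y_{i+1})$ satisfying $x_i + y_i = k+1$. Then $ubav \sim_k uabv$.
   Context: $A$ is a finite alphabet, $a,b\in A$, and $k\in\mathbb{N}$. Simon's congruence $u\sim_k v$ holds iff $u$ and $v$ have the same (scattered) subwords of length at most $k$. An $\mathsf{X}$-ranker is a nonempty word over $\{\mathsf{X}_a : a\in A\}$ ("go to the next $a$-position", starting with the first $a$-position) and a $\mathsf{Y}$-ranker a nonempty word over $\{\mathsf{Y}_a : a\in A\}$ ("go to the previous $a$-position", starting with the last $a$-position). The attribute of position $i$ is $(x_i,y_i)$, where $x_i$ (resp. $y_i$) is the length of a shortest $\mathsf{X}$-ranker (resp. $\mathsf{Y}$-ranker) reaching $i$. *)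

theory Defs
  imports Main "HOL-Library.Sublist"
begin

text \<open>Words are lists; positions are 1-indexed: position p of w (1 \<le> p \<le> length w)
  carries the letter w ! (p - 1).  A ranker is represented by the nonempty list of
  letters c of its operators X_c (resp. Y_c).\<close>

definition simon_cong :: "nat \<Rightarrow> 'a list \<Rightarrow> 'a list \<Rightarrow> bool" where
  "simon_cong k u v \<longleftrightarrow> (\<forall>w. length w \<le> k \<longrightarrow> (subseq w u \<longleftrightarrow> subseq w v))"

fun xrank_from :: "'a list \<Rightarrow> nat \<Rightarrow> 'a list \<Rightarrow> nat option" where
  "xrank_from w j [] = Some j"
| "xrank_from w j (c # r) =
     (if \<exists>p. j < p \<and> p \<le> length w \<and> w ! (p - 1) = c
      then xrank_from w (LEAST p. j < p \<and> p \<le> length w \<and> w ! (p - 1) = c) r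
      else None)"

fun yrank_from :: "'a list \<Rightarrow> nat \<Rightarrow> 'a list \<Rightarrow> nat option" where
  "yrank_from w j [] = Some j"
| "yrank_from w j (c # r) =
     (if \<exists>p. 1 \<le> p \<and> p < j \<and> w ! (p - 1) = c
      then yrank_from w (GREATEST p. 1 \<le> p \<and> p < j \<and> w ! (p - 1) = c) r
      else None)"

definition xeval :: "'a list \<Rightarrow> 'a list \<Rightarrow> nat option" where
  "xeval w r = xrank_from w 0 r"

definition yeval :: "'a list \<Rightarrow> 'a list \<Rightarrow> nat option" where
  "yeval w r = yrank_from w (Suc (length w)) r"

definition xattr :: "'a list \<Rightarrow> nat \<Rightarrow> nat" where
  "xattr w i = (LEAST n. \<exists>r. r \<noteq> [] \<and> length r = n \<and> xeval w r = Some i)"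

definition yattr :: "'a list \<Rightarrow> nat \<Rightarrow> nat" where
  "yattr w i = (LEAST n. \<exists>r. r \<noteq> [] \<and> length r = n \<and> yeval w r = Some i)"

end

theory Submission imports Defs begin


lemma subseq_first_split:
  assumes "subseq (c # r) M"
  obtains P Q where "M = P @ c # Q" "c \<notin> set P" "subseq r Q"
proof -
  from assms have "c \<in> set M" using list_emb_set[OF assms, of c] by auto
  then obtain P Q where M: "M = P @ c # Q" "c \<notin> set P" by (meson split_list_first)
  have "subseq (c # r) (P @ c # Q)" using assms M by simp
  hence "subseq r Q" using M(2)
  proof (induction P)
    case Nil then show ?case by (simp add: subseq_Cons2')
  next
    case (Cons x P) then show ?case by (auto split: if_splits)
  qed
  thus ?thesis using M that by blast
qed

lemma xrank_lemma:
  assumes "r \<noteq> []" "subseq r M" "\<not> subseq r (butlast M)"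
  shows "xrank_from (L1 @ M @ N) (length L1) r = Some (length L1 + length M)"
  using assms
proof (induction r arbitrary: L1 M)
  case Nil then show ?case by simp
next
  case (Cons c r')
  obtain P Q where M: "M = P @ c # Q" "c \<notin> set P" "subseq r' Q"
    by (rule subseq_first_split[OF Cons.prems(2)])
  let ?w = "L1 @ M @ N"
  let ?q = "length L1 + length P + 1"
  have wq: "?w ! (?q - 1) = c" using M by (simp add: nth_append)
  have least: "(LEAST p. length L1 < p \<and> p \<le> length ?w \<and> ?w ! (p - 1) = c) = ?q"
  proof (rule Least_equality)
    show "length L1 < ?q \<and> ?q \<le> length ?w \<and> ?w ! (?q - 1) = c" using wq M by simp
  next
    fix p assume p: "length L1 < p \<and> p \<le> length ?w \<and> ?w ! (p - 1) = c"
    show "?q \<le> p"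
    proof (rule ccontr)
      assume "\<not> ?q \<le> p"
      define m where "m = p - 1 - length L1"
      have pm: "p - 1 = length L1 + m" using p m_def by simp
      have mP: "m < length P" using p \<open>\<not> ?q \<le> p\<close> unfolding m_def by linarith
      have "?w ! (p - 1) = (P @ c # Q @ N) ! m" unfolding pm using M
        by (simp only: nth_append_length_plus append_assoc append_Cons)
      also have "\<dots> = P ! m" using mP by (simp add: nth_append)
      finally have "P ! m = c" using p by simp
      thus False using mP M(2) by (metis nth_mem)
    qed
  qed
  have ex: "\<exists>p. length L1 < p \<and> p \<le> length ?w \<and> ?w ! (p - 1) = c"
    using wq M by (intro exI[of _ ?q]) simp
  have step: "xrank_from ?w (length L1) (c # r') = xrank_from ?w ?q r'"
    by (subst xrank_from.simps(2), subst if_P[OF ex], subst least, rule refl)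
  show ?case
  proof (cases "r' = []")
    case True
    have "Q = []"
    proof (rule ccontr)
      assume "Q \<noteq> []"
      hence "butlast M = P @ c # butlast Q" using M by (simp add: butlast_append)
      hence "subseq [c] (butlast M)" by (simp add: subseq_singleton_left)
      thus False using Cons.prems(3) True by simp
    qed
    then show ?thesis using step True M by simp
  next
    case False
    have Qne: "Q \<noteq> []" using M(3) False by auto
    have nb: "\<not> subseq r' (butlast Q)"
    proof
      assume "subseq r' (butlast Q)"
      hence "subseq (c # r') (P @ c # butlast Q)"
        by (simp add: list_emb_append2)
      moreover have "butlast M = P @ c # butlast Q" using M Qne by (simp add: butlast_append)
      ultimately show False using Cons.prems(3) by simp
    qed
    have "xrank_from ((L1 @ P @ [c]) @ Q @ N) (length (L1 @ P @ [c])) r' = Some (length (L1 @ P @ [c]) + length Q)"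
      using Cons.IH[OF False M(3) nb] .
    moreover have "(L1 @ P @ [c]) @ Q @ N = ?w" using M by simp
    ultimately show ?thesis using step M by simp
  qed
qed


lemma subseq_rev_iff: "subseq (rev xs) (rev ys) \<longleftrightarrow> subseq xs ys"
proof -
  have *: "subseq xs ys \<Longrightarrow> subseq (rev xs) (rev ys)" for xs ys :: "'b list"
    by (induction rule: list_emb.induct) (auto intro: list_emb_append_mono subseq_rev_drop_many)
  show ?thesis using *[of xs ys] *[of "rev xs" "rev ys"] by auto
qed

lemma subseq_last_split:
  assumes "subseq (r @ [c]) M"
  obtains P Q where "M = P @ c # Q" "c \<notin> set Q" "subseq r P"
proof -
  have "subseq (c # rev r) (rev M)" using assms subseq_rev_iff[of "r @ [c]" M] by simp
  then obtain P' Q' where M: "rev M = P' @ c # Q'" "c \<notin> set P'" "subseq (rev r) Q'"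
    by (rule subseq_first_split)
  have "M = rev Q' @ c # rev P'" using M(1) by (metis rev_append rev_rev_ident rev.simps(2) append_assoc append_Cons append_Nil)
  moreover have "subseq r (rev Q')" using M(3) subseq_rev_iff[of r "rev Q'"] by simp
  ultimately show ?thesis using that M(2) by simp
qed

lemma yrank_lemma:
  assumes "r \<noteq> []" "subseq (rev r) M" "\<not> subseq (rev r) (tl M)"
  shows "yrank_from (L1 @ M @ N) (length L1 + length M + 1) r = Some (length L1 + 1)"
  using assms
proof (induction r arbitrary: M N)
  case Nil then show ?case by simp
next
  case (Cons c r')
  have "subseq (rev r' @ [c]) M" using Cons.prems(2) by simp
  then obtain P Q where M: "M = P @ c # Q" "c \<notin> set Q" "subseq (rev r') P"
    by (rule subseq_last_split)
  let ?w = "L1 @ M @ N"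
  let ?j = "length L1 + length M + 1"
  let ?q = "length L1 + length P + 1"
  have wq: "?w ! (?q - 1) = c" using M by (simp add: nth_append)
  have greatest: "(GREATEST p. 1 \<le> p \<and> p < ?j \<and> ?w ! (p - 1) = c) = ?q"
  proof (rule Greatest_equality)
    show "1 \<le> ?q \<and> ?q < ?j \<and> ?w ! (?q - 1) = c" using wq M by simp
  next
    fix p assume p: "1 \<le> p \<and> p < ?j \<and> ?w ! (p - 1) = c"
    show "p \<le> ?q"
    proof (rule ccontr)
      assume np: "\<not> p \<le> ?q"
      define m where "m = p - 1 - ?q"
      have pm: "p - 1 = length (L1 @ P @ [c]) + m" using np m_def by simp
      have lM: "length M = length P + length Q + 1" using M by simp
      have mQ: "m < length Q" using p np lM unfolding m_def by linarith
      have wsplit: "?w = (L1 @ P @ [c]) @ (Q @ N)" using M by simp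
      have "?w ! (p - 1) = (Q @ N) ! m" unfolding pm wsplit
        by (rule nth_append_length_plus)
      also have "\<dots> = Q ! m" using mQ by (simp add: nth_append)
      finally have "Q ! m = c" using p by simp
      thus False using mQ M(2) by (metis nth_mem)
    qed
  qed
  have ex: "\<exists>p. 1 \<le> p \<and> p < ?j \<and> ?w ! (p - 1) = c"
    using wq M by (intro exI[of _ ?q]) simp
  have step: "yrank_from ?w ?j (c # r') = yrank_from ?w ?q r'"
    by (subst yrank_from.simps(2), subst if_P[OF ex], subst greatest, rule refl)
  show ?case
  proof (cases "r' = []")
    case True
    have "P = []"
    proof (rule ccontr)
      assume "P \<noteq> []"
      hence "tl M = tl P @ c # Q" using M by simp
      hence "subseq [c] (tl M)" by (simp add: subseq_singleton_left)
      thus False using Cons.prems(3) True by simp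
    qed
    then show ?thesis using step True M by simp
  next
    case False
    have Pne: "P \<noteq> []" using M(3) False by auto
    have nb: "\<not> subseq (rev r') (tl P)"
    proof
      assume "subseq (rev r') (tl P)"
      hence "subseq (rev r' @ [c]) (tl P @ c # Q)"
        by (metis list_emb_append_mono subseq_Cons2 list_emb_Nil)
      moreover have "tl M = tl P @ c # Q" using M Pne by simp
      ultimately show False using Cons.prems(3) by simp
    qed
    have "yrank_from (L1 @ P @ (c # Q @ N)) (length L1 + length P + 1) r' = Some (length L1 + 1)"
      using Cons.IH[OF False M(3) nb] .
    moreover have "L1 @ P @ (c # Q @ N) = ?w" using M by simp
    ultimately show ?thesis using step by simp
  qed
qed


lemma swap_key:
  assumes "subseq s (u @ c # d # v)" "\<not> subseq s (u @ d # c # v)"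
  obtains s1 s3 where "s = s1 @ c # d # s3" "\<not> subseq (s1 @ [c]) u" "\<not> subseq (d # s3) v"
    "subseq s1 u" "subseq s3 v"
proof -
  have "subseq s (u @ ([c, d] @ v))" using assms(1) by simp
  then obtain s1 t where st: "s = s1 @ t" "subseq s1 u" "subseq t ([c, d] @ v)"
    by (rule subseq_appendE)
  then obtain s2 s3 where t: "t = s2 @ s3" "subseq s2 [c, d]" "subseq s3 v"
    by (metis subseq_appendE)
  have s2: "s2 = [c, d]"
  proof (rule ccontr)
    assume ne: "s2 \<noteq> [c, d]"
    have "subseq s2 [d, c]"
    proof (cases s2)
      case Nil then show ?thesis by simp
    next
      case (Cons x xs)
      show ?thesis
      proof (cases xs)
        case Nil then show ?thesis using t(2) Cons by (auto split: if_splits)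
      next
        case (Cons y ys)
        have "length s2 \<le> 2" using t(2) list_emb_length by fastforce
        hence "ys = []" using Cons \<open>s2 = x # xs\<close> by simp
        hence "s2 = [c, d]" using t(2) Cons \<open>s2 = x # xs\<close> by (auto split: if_splits)
        then show ?thesis using ne by simp
      qed
    qed
    hence "subseq (s1 @ s2 @ s3) (u @ [d, c] @ v)" using st(2) t(3)
      by (intro list_emb_append_mono)
    thus False using assms(2) st(1) t(1) by simp
  qed
  have n1: "\<not> subseq (s1 @ [c]) u"
  proof
    assume "subseq (s1 @ [c]) u"
    hence "subseq ((s1 @ [c]) @ [d] @ s3) (u @ [d, c] @ v)" using t(3)
      by (intro list_emb_append_mono) (auto intro: list_emb_append_mono)
    thus False using assms(2) st(1) t(1) s2 by simp
  qed
  have n2: "\<not> subseq (d # s3) v"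
  proof
    assume "subseq (d # s3) v"
    hence "subseq (s1 @ [c] @ (d # s3)) (u @ [d, c] @ v)" using st(2)
      by (intro list_emb_append_mono) (auto intro: list_emb_append_mono)
    thus False using assms(2) st(1) t(1) s2 by simp
  qed
  show ?thesis using that[of s1 s3] st t s2 n1 n2 by simp
qed

lemma xattr_le: "r \<noteq> [] \<Longrightarrow> xeval w r = Some p \<Longrightarrow> xattr w p \<le> length r"
  unfolding xattr_def by (rule Least_le) blast

lemma yattr_le: "r \<noteq> [] \<Longrightarrow> yeval w r = Some p \<Longrightarrow> yattr w p \<le> length r"
  unfolding yattr_def by (rule Least_le) blast

lemma snoc_neq: "subseq (xs @ [a]) (ys @ [b]) \<Longrightarrow> a \<noteq> b \<Longrightarrow> subseq (xs @ [a]) ys"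
  using subseq_rev_iff[of "xs @ [a]" "ys @ [b]"] subseq_rev_iff[of "xs @ [a]" ys]
  by (auto split: if_splits)

theorem proposition11:
  fixes u v :: "'a list" and a b :: 'a and i k :: nat
  assumes "length (u @ [b]) = i"
    and "xattr (u @ b # a # v) i = xattr (u @ b # a # v) (i + 1)"
    and "yattr (u @ b # a # v) i = yattr (u @ b # a # v) (i + 1)"
    and "xattr (u @ b # a # v) i + yattr (u @ b # a # v) i = k + 1"
  shows "simon_cong k (u @ b # a # v) (u @ a # b # v)"
proof (cases "a = b")
  case True then show ?thesis by (simp add: simon_cong_def)
next
  case ab: False
  let ?w = "u @ b # a # v"
  have lw: "length ?w = length u + length v + 2" by simp
  show ?thesis unfolding simon_cong_def
  proof (intro allI impI iffI)
    fix s :: "'a list" assume ls: "length s \<le> k" and s: "subseq s ?w"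
    show "subseq s (u @ a # b # v)"
    proof (rule ccontr)
      assume ns: "\<not> subseq s (u @ a # b # v)"
      obtain s1 s3 where sd: "s = s1 @ b # a # s3" "\<not> subseq (s1 @ [b]) u" "\<not> subseq (a # s3) v"
          "subseq s1 u" "subseq s3 v"
        using s ns by (rule swap_key)
      have h1: "subseq (s1 @ [b]) (u @ [b])" using sd(4) by (intro list_emb_append_mono) auto
      have "xrank_from ([] @ (u @ [b]) @ (a # v)) (length ([]::'a list)) (s1 @ [b]) = Some (length ([]::'a list) + length (u @ [b]))"
        using sd(2) by (intro xrank_lemma[OF _ h1]) auto
      hence "xeval ?w (s1 @ [b]) = Some i" using assms(1) by (simp add: xeval_def)
      hence x: "xattr ?w i \<le> length s1 + 1" using xattr_le[of "s1 @ [b]"] by simp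
      have "yrank_from ((u @ [b]) @ (a # v) @ []) (length (u @ [b]) + length (a # v) + 1) (rev (a # s3)) = Some (length (u @ [b]) + 1)"
        using sd by (intro yrank_lemma) auto
      hence "yeval ?w (rev (a # s3)) = Some (i + 1)" using assms(1) by (simp add: yeval_def)
      hence y: "yattr ?w (i + 1) \<le> length s3 + 1" using yattr_le[of "rev (a # s3)"] by simp
      have "length s = length s1 + length s3 + 2" using sd by simp
      thus False using x y assms(3,4) ls by linarith
    qed
  next
    fix s :: "'a list" assume ls: "length s \<le> k" and s: "subseq s (u @ a # b # v)"
    show "subseq s ?w"
    proof (rule ccontr)
      assume ns: "\<not> subseq s ?w"
      obtain s1 s3 where sd: "s = s1 @ a # b # s3" "\<not> subseq (s1 @ [a]) u" "\<not> subseq (b # s3) v"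
          "subseq s1 u" "subseq s3 v"
        using s ns by (rule swap_key)
      have n1: "\<not> subseq (s1 @ [a]) (u @ [b])" using sd(2) snoc_neq ab by metis
      have h1: "subseq (s1 @ [a]) (u @ [b, a])" using sd(4) by (intro list_emb_append_mono) auto
      have "xrank_from ([] @ (u @ [b, a]) @ v) (length ([]::'a list)) (s1 @ [a]) = Some (length ([]::'a list) + length (u @ [b, a]))"
        using n1 by (intro xrank_lemma[OF _ h1]) (auto simp: butlast_append)
      hence "xeval ?w (s1 @ [a]) = Some (i + 1)" using assms(1) by (simp add: xeval_def)
      hence x: "xattr ?w (i + 1) \<le> length s1 + 1" using xattr_le[of "s1 @ [a]"] by simp
      have "yrank_from (u @ (b # a # v) @ []) (length u + length (b # a # v) + 1) (rev (b # s3)) = Some (length u + 1)"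
        using sd ab by (intro yrank_lemma) auto
      hence "yeval ?w (rev (b # s3)) = Some i" using assms(1) by (simp add: yeval_def)
      hence y: "yattr ?w i \<le> length s3 + 1" using yattr_le[of "rev (b # s3)"] by simp
      have "length s = length s1 + length s3 + 2" using sd by simp
      thus False using x y assms(2,4) ls by linarith
    qed
  qed
qed

end
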